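(* Let $0<T<\infty$, $\Delta=(0,T]$, and let $F$ be a distribution on $[0,\infty)$ belonging to $\mathcal L_\Delta$. Assume there exist $c>0$ and $x_0<\infty$ such that $F(x+t+\Delta)\ge cF(x+\Delta)$ for all $t\in(0,x]$ and all $x>x_0$. Then $F\in\mathcal S_\Delta$.
   Context: $x+\Delta=(x,x+T]$. $F\in\mathcal L_\Delta$ means $F(x+\Delta)>0$ for all large $x$ and $F(x+t+\Delta)/F(x+\Delta)\to1$ as $x\to\infty$ uniformly in $t\in[0,1]$. A distribution $F$ on $[0,\infty)$ with unbounded support is in $\mathcal S_\Delta$ if $F\in\mathcal L_\Delta$ and $(F*F)(x+\Delta)\sim2F(x+\Delta)$ as $x\to\infty$. *)

theory Defs
  imports "HOL-Probability.Probability" "HOL-Library.Landau_Symbols"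
begin

definition distribution_nonneg :: "real measure \<Rightarrow> bool" where
  "distribution_nonneg F \<longleftrightarrow> prob_space F \<and> sets F = sets borel \<and> measure F {..<0} = 0"

text \<open>F(x + Delta) with Delta = (0,T], i.e. the mass of the interval (x, x+T].\<close>
definition Fdelta :: "real measure \<Rightarrow> real \<Rightarrow> real \<Rightarrow> real" where
  "Fdelta F T x = measure F {x<..x+T}"

definition L_Delta :: "real \<Rightarrow> real measure \<Rightarrow> bool" where
  "L_Delta T F \<longleftrightarrow>
     (\<forall>\<^sub>F x in at_top. Fdelta F T x > 0) \<and>
     (\<forall>e>0. \<forall>\<^sub>F x in at_top. \<forall>t\<in>{0..1}. \<bar>Fdelta F T (x + t) / Fdelta F T x - 1\<bar> < e)"

definition S_Delta :: "real \<Rightarrow> real measure \<Rightarrow> bool" where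
  "S_Delta T F \<longleftrightarrow>
     (\<forall>M. measure F {M<..} > 0) \<and> L_Delta T F \<and>
     ((\<lambda>x. Fdelta (F \<star> F) T x) \<sim>[at_top] (\<lambda>x. 2 * Fdelta F T x))"

end

theory Submission
  imports Defs
begin
lemma shift_at_top: "filterlim (\<lambda>x::real. x + a) at_top at_top"
  unfolding filterlim_at_top eventually_at_top_linorder
proof (intro allI)
  fix Z :: real show "\<exists>N. \<forall>n\<ge>N. Z \<le> n + a" by (rule exI[of _ "Z - a"]) auto
qed

lemma longtail1:
  assumes L: "L_Delta T F" and t: "t \<in> {0..1}"
  shows "((\<lambda>z. Fdelta F T (z+t) / Fdelta F T z) \<longlongrightarrow> 1) at_top"
proof (rule tendstoI)
  fix e :: real assume "e > 0"
  with L have "\<forall>\<^sub>F x in at_top. \<forall>t\<in>{0..1}. \<bar>Fdelta F T (x + t) / Fdelta F T x - 1\<bar> < e"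
    unfolding L_Delta_def by blast
  then show "\<forall>\<^sub>F x in at_top. dist (Fdelta F T (x + t) / Fdelta F T x) 1 < e"
    by eventually_elim (use t in \<open>auto simp: dist_real_def\<close>)
qed

lemma longtailn:
  assumes L: "L_Delta T F"
  shows "\<forall>t\<in>{0..real n}. ((\<lambda>z. Fdelta F T (z+t) / Fdelta F T z) \<longlongrightarrow> 1) at_top"
proof (induction n)
  case 0
  have "((\<lambda>z. Fdelta F T (z+0) / Fdelta F T z) \<longlongrightarrow> 1) at_top" by (rule longtail1[OF L]) auto
  then show ?case by auto
next
  case (Suc n)
  show ?case
  proof
    fix t assume t: "t \<in> {0..real (Suc n)}"
    show "((\<lambda>z. Fdelta F T (z+t) / Fdelta F T z) \<longlongrightarrow> 1) at_top"
    proof (cases "t \<le> 1")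
      case True then show ?thesis using longtail1[OF L] t by auto
    next
      case False
      have pos: "\<forall>\<^sub>F x in at_top. Fdelta F T x > 0" using L unfolding L_Delta_def by blast
      have a: "((\<lambda>z. Fdelta F T (z+1+(t-1)) / Fdelta F T (z+1)) \<longlongrightarrow> 1) at_top"
        using Suc.IH t False
        by (intro filterlim_compose[OF _ shift_at_top[of 1]]) auto 
      have b: "((\<lambda>z. Fdelta F T (z+1) / Fdelta F T z) \<longlongrightarrow> 1) at_top"
        using longtail1[OF L] by auto
      have lim: "((\<lambda>z. Fdelta F T (z+1+(t-1)) / Fdelta F T (z+1) * (Fdelta F T (z+1) / Fdelta F T z)) \<longlongrightarrow> 1*1) at_top"
        by (intro tendsto_mult a b)
      have eq: "\<forall>\<^sub>F z in at_top. Fdelta F T (z+1+(t-1)) / Fdelta F T (z+1) * (Fdelta F T (z+1) / Fdelta F T z)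
            = Fdelta F T (z+t) / Fdelta F T z"
        using filterlim_iff[THEN iffD1, OF shift_at_top[of 1], rule_format, OF pos]
      proof eventually_elim
        case (elim z)
        have "z+1+(t-1) = z+t" by simp
        then show ?case using elim by simp
      qed
      show ?thesis using Lim_transform_eventually[OF lim eq] by simp
    qed
  qed
qed

lemma longtail:
  assumes L: "L_Delta T F" and "t \<ge> 0"
  shows "((\<lambda>z. Fdelta F T (z+t) / Fdelta F T z) \<longlongrightarrow> 1) at_top"
  using longtailn[OF L, of "nat \<lceil>t\<rceil>"] assms(2) by (meson atLeastAtMost_iff real_nat_ceiling_ge)


lemma Fd_cdf:
  assumes F: "real_distribution F" and T: "T > 0"
  shows "Fdelta F T y = cdf F (y+T) - cdf F y"
proof -
  interpret real_distribution F by fact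
  show ?thesis unfolding Fdelta_def using T by (subst cdf_diff_eq) auto
qed

lemma Fd_meas:
  assumes F: "real_distribution F" and T: "T > 0"
  shows "(\<lambda>a. Fdelta F T (x - a)) \<in> borel_measurable borel"
proof -
  interpret real_distribution F by fact
  have cm[measurable]: "cdf F \<in> borel_measurable borel"
    by (rule borel_measurable_mono) (auto simp: mono_def intro: cdf_nondecreasing)
  show ?thesis unfolding Fd_cdf[OF F T] by measurable
qed

lemma decomp_enn:
  assumes F: "real_distribution F" and T: "T > 0"
  shows "\<exists>A3. A3 \<le> ennreal (Fdelta F T (x/2)) * ennreal (Fdelta F T (x/2)) \<and>
     ennreal (Fdelta (F \<star> F) T x) =
       (\<integral>\<^sup>+a. ennreal (indicator {..x/2} a * Fdelta F T (x-a)) \<partial>F) +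
       (\<integral>\<^sup>+a. ennreal (indicator {..x/2} a * Fdelta F T (x-a)) \<partial>F) + A3"
proof -
  interpret real_distribution F by fact
  interpret pair_sigma_finite F F ..
  have fin: "finite_measure F" by intro_locales
  define h where "h = x/2"
  define I where "I = {x<..x+T}"
  define J where "J = {h<..h+T}"
  have Im[measurable]: "I \<in> sets borel" by (simp add: I_def)
  have gm[measurable]: "(\<lambda>a. Fdelta F T (x - a)) \<in> borel_measurable borel"
    by (rule Fd_meas[OF F T])
  have sec: "(\<integral>\<^sup>+b. indicator I (a+b) \<partial>F) = ennreal (Fdelta F T (x - a))" for a
  proof -
    have "(\<integral>\<^sup>+b. indicator I (a+b) \<partial>F) = (\<integral>\<^sup>+b. indicator {x-a<..x-a+T} b \<partial>F)"
      by (intro nn_integral_cong) (auto simp: I_def split: split_indicator)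
    also have "\<dots> = ennreal (Fdelta F T (x - a))"
      by (simp add: emeasure_eq_measure Fdelta_def)
    finally show ?thesis .
  qed
  have sec': "(\<integral>\<^sup>+b. indicator I (b+a) \<partial>F) = ennreal (Fdelta F T (x - a))" for a
    using sec[of a] by (simp add: add.commute)
  have conv: "emeasure (F \<star> F) I = (\<integral>\<^sup>+a. \<integral>\<^sup>+b. indicator I (a+b) \<partial>F \<partial>F)"
    by (rule convolution_emeasure') (auto simp: I_def fin)
  have spl: "(indicator I (a+b) :: ennreal) = indicator {..h} a * indicator I (a+b) +
        indicator {..h} b * indicator I (a+b) + indicator J a * indicator J b * indicator I (a+b)" for a b
    using T by (auto simp: I_def J_def h_def split: split_indicator)
  have "emeasure (F \<star> F) I = (\<integral>\<^sup>+a. (\<integral>\<^sup>+b. indicator {..h} a * indicator I (a+b) \<partial>F) +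
        (\<integral>\<^sup>+b. indicator {..h} b * indicator I (a+b) \<partial>F) + 
        (\<integral>\<^sup>+b. indicator J a * indicator J b * indicator I (a+b) \<partial>F) \<partial>F)"
    unfolding conv
    by (intro nn_integral_cong, subst spl, subst nn_integral_add, simp_all add: I_def J_def,
        subst nn_integral_add, simp_all)
  also have "\<dots> = (\<integral>\<^sup>+a. \<integral>\<^sup>+b. indicator {..h} a * indicator I (a+b) \<partial>F \<partial>F) +
        (\<integral>\<^sup>+a. \<integral>\<^sup>+b. indicator {..h} b * indicator I (a+b) \<partial>F \<partial>F) + 
        (\<integral>\<^sup>+a. \<integral>\<^sup>+b. indicator J a * indicator J b * indicator I (a+b) \<partial>F \<partial>F)"
    by (subst nn_integral_add, simp_all add: I_def J_def, subst nn_integral_add, simp_all)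
  finally have e1: "emeasure (F \<star> F) I = \<dots>" .
  have t1: "(\<integral>\<^sup>+a. \<integral>\<^sup>+b. indicator {..h} a * indicator I (a+b) \<partial>F \<partial>F) =
      (\<integral>\<^sup>+a. ennreal (indicator {..x/2} a * Fdelta F T (x-a)) \<partial>F)"
    by (intro nn_integral_cong)
       (simp add: nn_integral_cmult I_def sec[unfolded I_def] h_def split: split_indicator)
  have t2: "(\<integral>\<^sup>+a. \<integral>\<^sup>+b. indicator {..h} b * indicator I (a+b) \<partial>F \<partial>F) =
      (\<integral>\<^sup>+b. \<integral>\<^sup>+a. indicator {..h} b * indicator I (a+b) \<partial>F \<partial>F)"
    by (rule Fubini'[symmetric]) (simp add: I_def)
  also have "\<dots> = (\<integral>\<^sup>+a. ennreal (indicator {..x/2} a * Fdelta F T (x-a)) \<partial>F)"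
    by (intro nn_integral_cong)
       (simp add: nn_integral_cmult sec' h_def split: split_indicator)
  finally have t2: "(\<integral>\<^sup>+a. \<integral>\<^sup>+b. indicator {..h} b * indicator I (a+b) \<partial>F \<partial>F) = \<dots>" .
  have t3: "(\<integral>\<^sup>+a. \<integral>\<^sup>+b. indicator J a * indicator J b * indicator I (a+b) \<partial>F \<partial>F) \<le>
      (\<integral>\<^sup>+a. \<integral>\<^sup>+b. indicator J a * indicator J b \<partial>F \<partial>F)"
    by (intro nn_integral_mono) (auto split: split_indicator)
  also have "\<dots> = ennreal (Fdelta F T (x/2)) * ennreal (Fdelta F T (x/2))"
    by (simp add: nn_integral_cmult nn_integral_multc J_def emeasure_eq_measure Fdelta_def h_def)
  finally have t3: "(\<integral>\<^sup>+a. \<integral>\<^sup>+b. indicator J a * indicator J b * indicator I (a+b) \<partial>F \<partial>F) \<le> \<dots>" .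
  have "ennreal (Fdelta (F \<star> F) T x) = emeasure (F \<star> F) I"
  proof -
    interpret C: finite_measure "F \<star> F" by (rule convolution_finite) (auto simp: fin)
    show ?thesis by (simp add: C.emeasure_eq_measure Fdelta_def I_def)
  qed
  then show ?thesis using e1 t1 t2 t3 by auto
qed


lemma half_at_top: "filterlim (\<lambda>x::real. x / 2) at_top at_top"
  unfolding filterlim_at_top eventually_at_top_linorder
proof (intro allI)
  fix Z :: real show "\<exists>N. \<forall>n\<ge>N. Z \<le> n / 2" by (rule exI[of _ "2 * Z"]) auto
qed

lemma decomp_real:
  assumes F: "real_distribution F" and T: "T > 0"
  shows "0 \<le> Fdelta (F \<star> F) T x - 2 * (\<integral>a. indicator {..x/2} a * Fdelta F T (x-a) \<partial>F) \<and>
         Fdelta (F \<star> F) T x - 2 * (\<integral>a. indicator {..x/2} a * Fdelta F T (x-a) \<partial>F) \<le> (Fdelta F T (x/2))^2"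
proof -
  interpret real_distribution F by fact
  have gm[measurable]: "(\<lambda>a. Fdelta F T (x - a)) \<in> borel_measurable borel"
    by (rule Fd_meas[OF F T])
  have int: "integrable F (\<lambda>a. indicator {..x/2} a * Fdelta F T (x-a))"
  proof (rule integrable_const_bound[where B=1])
    show "AE a in F. norm (indicator {..x/2} a * Fdelta F T (x-a)) \<le> 1"
      by (auto simp: Fdelta_def split: split_indicator)
  qed measurable
  have nn: "(\<integral>\<^sup>+a. ennreal (indicator {..x/2} a * Fdelta F T (x-a)) \<partial>F) =
      ennreal (\<integral>a. indicator {..x/2} a * Fdelta F T (x-a) \<partial>F)"
    by (rule nn_integral_eq_integral[OF int]) (auto simp: Fdelta_def split: split_indicator)
  define Jr where "Jr = (\<integral>a. indicator {..x/2} a * Fdelta F T (x-a) \<partial>F)"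
  have Jr0: "Jr \<ge> 0" unfolding Jr_def
    by (rule integral_nonneg_AE) (auto simp: Fdelta_def split: split_indicator)
  obtain A3 where A3: "A3 \<le> ennreal (Fdelta F T (x/2)) * ennreal (Fdelta F T (x/2))"
     "ennreal (Fdelta (F \<star> F) T x) = ennreal Jr + ennreal Jr + A3"
    using decomp_enn[OF F T, of x] unfolding nn Jr_def by blast
  show ?thesis
  proof (cases A3 rule: ennreal_cases)
    case (real r)
    have F0: "Fdelta (F \<star> F) T x \<ge> 0" by (simp add: Fdelta_def)
    have eqn: "ennreal (Fdelta (F \<star> F) T x) = ennreal (Jr + Jr + r)"
      using A3(2) real Jr0 by (simp add: ennreal_plus[symmetric] del: ennreal_plus)
    have nn2: "0 \<le> Jr + Jr + r" using Jr0 real by simp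
    have e: "Fdelta (F \<star> F) T x = Jr + Jr + r" using ennreal_inj[OF F0 nn2] eqn by blast
    have "r \<le> Fdelta F T (x/2) * Fdelta F T (x/2)"
      using A3(1) real by (simp add: ennreal_mult[symmetric] Fdelta_def ennreal_le_iff)
    then show ?thesis using e real unfolding Jr_def[symmetric] by (simp add: power2_eq_square)
  next
    case top then show ?thesis using A3(1) by (simp add: ennreal_mult_eq_top_iff top_unique)
  qed
qed


theorem proposition9:
  fixes F :: "real measure" and T :: real
  assumes "0 < T"
    and "distribution_nonneg F"
    and "L_Delta T F"
    and "\<exists>c>0. \<exists>x0. \<forall>x>x0. \<forall>t\<in>{0<..x}. Fdelta F T (x + t) \<ge> c * Fdelta F T x"
  shows "S_Delta T F"
proof -
  have T: "T > 0" by fact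
  have L: "L_Delta T F" by fact
  obtain c x0 where c: "c > 0" and H: "\<And>x t. x > x0 \<Longrightarrow> t \<in> {0<..x} \<Longrightarrow> Fdelta F T (x + t) \<ge> c * Fdelta F T x"
    using assms(4) by blast
  have RD: "real_distribution F" and neg: "measure F {..<0} = 0"
    using assms(2) unfolding distribution_nonneg_def real_distribution_def real_distribution_axioms_def
    by auto
  interpret real_distribution F by fact
  have pos: "\<forall>\<^sub>F x in at_top. Fdelta F T x > 0" using L unfolding L_Delta_def by blast
  have Fd0: "\<And>y. Fdelta F T y \<ge> 0" by (simp add: Fdelta_def)
  have gm[measurable]: "\<And>x. (\<lambda>a. Fdelta F T (x - a)) \<in> borel_measurable borel"
    by (rule Fd_meas[OF RD T])
  define Jr where "Jr x = (\<integral>a. indicator {..x/2} a * Fdelta F T (x-a) \<partial>F)" for x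
  define Rf where "Rf x = Fdelta (F \<star> F) T x - 2 * Jr x" for x
  have Rf: "0 \<le> Rf x" "Rf x \<le> (Fdelta F T (x/2))^2" for x
    using decomp_real[OF RD T, of x] unfolding Rf_def Jr_def by auto
  have AEnn: "AE a in F. a \<ge> 0"
  proof (rule AE_I')
    show "{..<0} \<in> null_sets F" using neg by (simp add: null_sets_def emeasure_eq_measure)
  qed auto
  have L1: "((\<lambda>x. Jr x / Fdelta F T x) \<longlongrightarrow> 1) at_top"
  proof -
    define s where "s x a = indicator {..x/2} a * Fdelta F T (x-a) / Fdelta F T x" for x a
    have "((\<lambda>x. integral\<^sup>L F (s x)) \<longlongrightarrow> integral\<^sup>L F (\<lambda>_. 1::real)) at_top"
    proof (rule integral_dominated_convergence_at_top[where w="\<lambda>_. max 1 (1/c)"])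
      show "(\<lambda>_. 1::real) \<in> borel_measurable F" by simp
      show "s x \<in> borel_measurable F" for x unfolding s_def by measurable
      show "integrable F (\<lambda>_. max 1 (1/c))" by simp
      show "AE a in F. ((\<lambda>x. s x a) \<longlongrightarrow> 1) at_top"
        using AEnn
      proof eventually_elim
        case (elim a)
        have "((\<lambda>z. Fdelta F T (z+a) / Fdelta F T z) \<longlongrightarrow> 1) at_top"
          by (rule longtail[OF L elim])
        from filterlim_compose[OF this shift_at_top[of "-a"]]
        have "((\<lambda>x. Fdelta F T x / Fdelta F T (x - a)) \<longlongrightarrow> 1) at_top" by simp
        from tendsto_inverse[OF this]
        have lim: "((\<lambda>x. Fdelta F T (x - a) / Fdelta F T x) \<longlongrightarrow> 1) at_top" by simp
        have "\<forall>\<^sub>F x in at_top. Fdelta F T (x - a) / Fdelta F T x = s x a"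
          using eventually_ge_at_top[of "2*a"]
          by eventually_elim (auto simp: s_def)
        from Lim_transform_eventually[OF lim this] show ?case .
      qed
      show "\<forall>\<^sub>F x in at_top. AE a in F. norm (s x a) \<le> max 1 (1/c)"
        using pos eventually_gt_at_top[of "2 * max x0 0"]
      proof eventually_elim
        case (elim x)
        show ?case using AEnn
        proof eventually_elim
          case (elim a)
          show ?case
          proof (cases "a \<le> x/2")
            case False then show ?thesis by (simp add: s_def)
          next
            case True
            show ?thesis
            proof (cases "a = 0")
              case True then show ?thesis using \<open>Fdelta F T x > 0\<close> c by (auto simp: s_def le_max_iff_disj split: split_indicator)
            next
              case False
              have "c * Fdelta F T (x - a) \<le> Fdelta F T (x - a + a)"
                using H[of "x - a" a] False elim True \<open>x > 2 * max x0 0\<close> by auto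
              then have "Fdelta F T (x - a) \<le> Fdelta F T x / c" using c by (simp add: field_simps)
              then have "Fdelta F T (x - a) / Fdelta F T x \<le> 1 / c"
                using \<open>Fdelta F T x > 0\<close> c by (simp add: field_simps)
              then show ?thesis using True \<open>Fdelta F T x > 0\<close> Fd0[of "x-a"]
                by (simp add: s_def)
            qed
          qed
        qed
      qed
    qed
    moreover have "integral\<^sup>L F (s x) = Jr x / Fdelta F T x" for x
      unfolding s_def Jr_def by simp
    moreover have "prob UNIV = 1" using prob_space by simp
    ultimately show ?thesis by simp
  qed
  have L2: "((\<lambda>x. Rf x / Fdelta F T x) \<longlongrightarrow> 0) at_top"
  proof -
    have "((\<lambda>y. Fdelta F T y) \<longlongrightarrow> 0) at_top"
    proof (rule tendsto_sandwich[where f="\<lambda>_. 0" and h="\<lambda>y. 1 - cdf F y"])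
      show "\<forall>\<^sub>F y in at_top. 0 \<le> Fdelta F T y" using Fd0 by simp
      show "\<forall>\<^sub>F y in at_top. Fdelta F T y \<le> 1 - cdf F y"
        using cdf_bounded_prob by (simp add: Fd_cdf[OF RD T])
      show "((\<lambda>y. 1 - cdf F y) \<longlongrightarrow> 0) at_top"
        using tendsto_diff[OF tendsto_const[of 1] cdf_lim_at_top_prob] by simp
    qed simp
    from filterlim_compose[OF this half_at_top]
    have h0: "((\<lambda>x. Fdelta F T (x/2) / c) \<longlongrightarrow> 0) at_top"
      using tendsto_divide[of _ 0 at_top "\<lambda>_. c" c] c by simp
    show ?thesis
    proof (rule tendsto_sandwich[where f="\<lambda>_. 0" and h="\<lambda>x. Fdelta F T (x/2) / c"])
      show "\<forall>\<^sub>F x in at_top. 0 \<le> Rf x / Fdelta F T x" using Rf Fd0 by simp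
      show "\<forall>\<^sub>F x in at_top. Rf x / Fdelta F T x \<le> Fdelta F T (x/2) / c"
        using pos eventually_gt_at_top[of "2 * max x0 0"]
      proof eventually_elim
        case (elim x)
        have "c * Fdelta F T (x/2) \<le> Fdelta F T (x/2 + x/2)"
          using H[of "x/2" "x/2"] elim by auto
        then have b: "c * Fdelta F T (x/2) \<le> Fdelta F T x" by simp
        have "Rf x \<le> Fdelta F T (x/2) * Fdelta F T (x/2)" using Rf(2)[of x] by (simp add: power2_eq_square)
        also have "\<dots> \<le> Fdelta F T (x/2) * (Fdelta F T x / c)"
          using b c Fd0[of "x/2"] by (intro mult_left_mono) (simp_all add: field_simps)
        finally show ?case using elim c by (simp add: field_simps)
      qed
    qed (simp_all add: h0)
  qed
  have L3: "((\<lambda>x. Fdelta (F \<star> F) T x / (2 * Fdelta F T x)) \<longlongrightarrow> 1 + 0 / 2) at_top"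
  proof -
    have "((\<lambda>x. Jr x / Fdelta F T x + (Rf x / Fdelta F T x) / 2) \<longlongrightarrow> 1 + 0 / 2) at_top"
      by (intro tendsto_intros L1 L2) simp
    moreover have "\<forall>\<^sub>F x in at_top. Jr x / Fdelta F T x + (Rf x / Fdelta F T x) / 2 =
        Fdelta (F \<star> F) T x / (2 * Fdelta F T x)"
      using pos by eventually_elim (simp add: Rf_def field_simps)
    ultimately show ?thesis by (rule Lim_transform_eventually)
  qed
  have asy: "(\<lambda>x. Fdelta (F \<star> F) T x) \<sim>[at_top] (\<lambda>x. 2 * Fdelta F T x)"
    by (rule asymp_equivI') (use L3 in simp)
  have supp: "measure F {M<..} > 0" for M
  proof -
    obtain N where N: "\<And>y. y \<ge> N \<Longrightarrow> Fdelta F T y > 0"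
      using pos unfolding eventually_at_top_linorder by blast
    define y where "y = max N M"
    have "0 < Fdelta F T y" using N y_def by simp
    also have "\<dots> \<le> measure F {M<..}"
      unfolding Fdelta_def y_def by (intro finite_measure_mono) auto
    finally show ?thesis .
  qed
  show ?thesis unfolding S_Delta_def using supp L asy by blast
qed

end
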